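(* Let $R$ be a commutative Bezout domain. The following are equivalent: (1) $R$ has stable range 1.5; (2) for every $n\times m$ matrix $A$ over $R$ with $\operatorname{rank}A>1$ there is a row $u=(1,u_2,\dots,u_n)$ over $R$ such that $uA=(b_1,\dots,b_m)$ where $(b_1,\dots,b_m)$ equals (up to a unit) the greatest common divisor of all entries of $A$.
   Context: A commutative Bezout domain is a commutative integral domain with $1\ne0$ in which every finitely generated ideal is principal. $R$ has stable range 1.5 if for all $a,b\in R$ and $c\in R\setminus\{0\}$ with $(a,b,c)=1$ there is $r\in R$ with $(a+br,c)=1$. The rank of a matrix is the largest order of a nonzero minor. *)

theory Defs
  imports "Jordan_Normal_Form.Determinant" "Jordan_Normal_Form.DL_Submatrix"
begin

definition gen_ideal :: "'a::comm_ring_1 set \<Rightarrow> 'a set" where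
  "gen_ideal S = {x. \<exists>f. x = (\<Sum>s\<in>S. f s * s)}"

definition bezout_domain :: "'a::idom itself \<Rightarrow> bool" where
  "bezout_domain _ \<longleftrightarrow>
     (\<forall>S::'a set. finite S \<longrightarrow> (\<exists>d. gen_ideal S = {d * r | r. True}))"

definition stable_range_15 :: "'a::comm_ring_1 itself \<Rightarrow> bool" where
  "stable_range_15 _ \<longleftrightarrow>
     (\<forall>a b c::'a. c \<noteq> 0 \<longrightarrow> 1 \<in> gen_ideal {a, b, c} \<longrightarrow>
        (\<exists>r. 1 \<in> gen_ideal {a + b * r, c}))"

definition is_gcd_of :: "'a::comm_ring_1 \<Rightarrow> 'a set \<Rightarrow> bool" where
  "is_gcd_of d S \<longleftrightarrow> (\<forall>s\<in>S. d dvd s) \<and> (\<forall>e. (\<forall>s\<in>S. e dvd s) \<longrightarrow> e dvd d)"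

definition minor_rank :: "'a::comm_ring_1 mat \<Rightarrow> nat" where
  "minor_rank A = Max {k. \<exists>I J. I \<subseteq> {..<dim_row A} \<and> J \<subseteq> {..<dim_col A} \<and>
       card I = k \<and> card J = k \<and> det (submatrix A I J) \<noteq> 0}"

definition entries :: "'a mat \<Rightarrow> 'a set" where
  "entries A = {A $$ (i, j) | i j. i < dim_row A \<and> j < dim_col A}"

definition row_times_mat :: "'a::comm_ring_1 vec \<Rightarrow> 'a mat \<Rightarrow> 'a vec" where
  "row_times_mat u A = vec (dim_col A) (\<lambda>j. \<Sum>i<dim_row A. u $ i * A $$ (i, j))"

end

theory Submission
  imports Defs
begin


lemma det_zero_minors:
  fixes B :: "'a::idom mat"
  assumes B: "B \<in> carrier_mat k k" and k: "k \<ge> 2"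
    and M: "\<And>i1 i2 j1 j2. i1 < k \<Longrightarrow> i2 < k \<Longrightarrow> j1 < k \<Longrightarrow> j2 < k \<Longrightarrow>
       B $$ (i1,j1) * B $$ (i2,j2) = B $$ (i1,j2) * B $$ (i2,j1)"
  shows "det B = 0"
proof (cases "\<forall>q<k. B $$ (0,q) = 0")
  case True
  have "multrow 0 0 B = B"
    by (rule eq_matI, insert B True, auto)
  moreover have "det (multrow 0 0 B) = 0 * det B"
    by (rule det_multrow[OF _ B], insert k, auto)
  ultimately show ?thesis by simp
next
  case False
  then obtain q where q: "q < k" "B $$ (0,q) \<noteq> 0" by auto
  define p where "p = B $$ (0,q)"
  define C where "C = multrow 1 p B"
  have C: "C \<in> carrier_mat k k" unfolding C_def using B by auto
  have dC: "det C = p * det B" unfolding C_def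
    by (rule det_multrow[OF _ B], insert k, auto)
  define D where "D = addrow (- B $$ (1,q)) 1 0 C"
  have D: "D \<in> carrier_mat k k" unfolding D_def using C by auto
  have dD: "det D = det C" unfolding D_def
    by (rule det_addrow[OF _ _ C], insert k, auto)
  have "multrow 1 0 D = D"
  proof (rule eq_matI)
    fix i j assume ij: "i < dim_row D" "j < dim_col D"
    show "multrow 1 0 D $$ (i, j) = D $$ (i, j)"
    proof (cases "i = 1")
      case True
      have "D $$ (1,j) = - B $$ (1,q) * B $$ (0,j) + p * B $$ (1,j)"
        using ij D B k True unfolding D_def C_def by auto
      also have "\<dots> = 0" unfolding p_def using M[of 0 1 q j] ij D q k by (auto simp: algebra_simps)
      finally show ?thesis using ij True by simp
    qed (insert ij, auto)
  qed auto
  moreover have "det (multrow 1 0 D) = 0 * det D"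
    by (rule det_multrow[OF _ D], insert k, auto)
  ultimately have "det D = 0" by simp
  with dD dC q show ?thesis unfolding p_def by simp
qed



lemma rank_minor:
  fixes A :: "'a::idom mat"
  assumes "minor_rank A > 1"
  shows "\<exists>i1 i2 j1 j2. i1 < dim_row A \<and> i2 < dim_row A \<and> j1 < dim_col A \<and> j2 < dim_col A \<and>
     A $$ (i1,j1) * A $$ (i2,j2) \<noteq> A $$ (i1,j2) * A $$ (i2,j1)"
proof (rule ccontr)
  assume N0: "\<not> ?thesis"
  have N: "\<And>i1 i2 j1 j2. i1 < dim_row A \<Longrightarrow> i2 < dim_row A \<Longrightarrow> j1 < dim_col A \<Longrightarrow> j2 < dim_col A \<Longrightarrow>
     A $$ (i1,j1) * A $$ (i2,j2) = A $$ (i1,j2) * A $$ (i2,j1)" using N0 by blast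
  let ?S = "{k. \<exists>I J. I \<subseteq> {..<dim_row A} \<and> J \<subseteq> {..<dim_col A} \<and>
       card I = k \<and> card J = k \<and> det (submatrix A I J) \<noteq> 0}"
  have fin: "finite ?S"
  proof (rule finite_subset[of _ "{..dim_row A}"])
    show "?S \<subseteq> {..dim_row A}"
    proof
      fix k assume "k \<in> ?S"
      then obtain I where "I \<subseteq> {..<dim_row A}" "card I = k" by blast
      then have "k \<le> card {..<dim_row A}" using card_mono by blast
      then show "k \<in> {..dim_row A}" by simp
    qed
  qed simp
  have "0 \<in> ?S"
  proof -
    have "submatrix A {} {} \<in> carrier_mat 0 0" unfolding submatrix_def by auto
    then have "det (submatrix A {} {}) = 1" by simp
    then show ?thesis by (intro CollectI exI[of _ "{}"]) auto
  qed
  then have ne: "?S \<noteq> {}" by (metis empty_iff)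
  have "Max ?S \<in> ?S" by (rule Max_in[OF fin ne])
  moreover have "Max ?S > 1" using assms unfolding minor_rank_def by simp
  ultimately obtain I J k where IJ: "I \<subseteq> {..<dim_row A}" "J \<subseteq> {..<dim_col A}"
    "card I = k" "card J = k" "det (submatrix A I J) \<noteq> 0" "k \<ge> 2"
  proof -
    assume r: "\<And>I J k. I \<subseteq> {..<dim_row A} \<Longrightarrow> J \<subseteq> {..<dim_col A} \<Longrightarrow>
      card I = k \<Longrightarrow> card J = k \<Longrightarrow> det (submatrix A I J) \<noteq> 0 \<Longrightarrow> k \<ge> 2 \<Longrightarrow> thesis"
    assume "Max ?S \<in> ?S" "Max ?S > 1"
    then show thesis using r[of _ _ "Max ?S"] by force
  qed
  have fI: "finite I" "finite J" using IJ finite_subset by blast+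
  have cI: "{i. i < dim_row A \<and> i \<in> I} = I" "{j. j < dim_col A \<and> j \<in> J} = J" using IJ by auto
  have car: "submatrix A I J \<in> carrier_mat k k"
  proof -
    have "dim_row (submatrix A I J) = k" by (metis dim_submatrix(1) cI(1) IJ(3))
    moreover have "dim_col (submatrix A I J) = k" by (metis dim_submatrix(2) cI(2) IJ(4))
    ultimately show ?thesis by (rule carrier_matI)
  qed
  have "det (submatrix A I J) = 0"
  proof (rule det_zero_minors[OF car IJ(6)])
    fix i1 i2 j1 j2 assume h: "i1 < k" "i2 < k" "j1 < k" "j2 < k"
    have p: "pick I i1 \<in> I" "pick I i2 \<in> I" "pick J j1 \<in> J" "pick J j2 \<in> J"
      using h IJ by (auto intro!: pick_in_set)
    have idx: "\<And>a b. a < k \<Longrightarrow> b < k \<Longrightarrow> submatrix A I J $$ (a,b) = A $$ (pick I a, pick J b)"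
      by (rule submatrix_index, unfold cI, insert IJ, auto)
    show "submatrix A I J $$ (i1, j1) * submatrix A I J $$ (i2, j2) =
          submatrix A I J $$ (i1, j2) * submatrix A I J $$ (i2, j1)"
      unfolding idx[OF h(1,3)] idx[OF h(2,4)] idx[OF h(1,4)] idx[OF h(2,3)]
      using p IJ(1,2) by (intro N) auto
  qed
  with IJ show False by simp
qed


lemma rank_2x2:
  fixes A :: "'a::idom mat"
  assumes A: "A \<in> carrier_mat 2 2" and z: "A $$ (0,1) = 0" and d: "A $$ (0,0) * A $$ (1,1) \<noteq> 0"
  shows "minor_rank A > 1"
proof -
  let ?S = "{k. \<exists>I J. I \<subseteq> {..<dim_row A} \<and> J \<subseteq> {..<dim_col A} \<and>
       card I = k \<and> card J = k \<and> det (submatrix A I J) \<noteq> 0}"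
  have fin: "finite ?S"
  proof (rule finite_subset[of _ "{..dim_row A}"])
    show "?S \<subseteq> {..dim_row A}"
    proof
      fix k assume "k \<in> ?S"
      then obtain I where "I \<subseteq> {..<dim_row A}" "card I = k" by blast
      then have "k \<le> card {..<dim_row A}" using card_mono by blast
      then show "k \<in> {..dim_row A}" by simp
    qed
  qed simp
  have p0: "pick {0,1} 0 = 0" by (simp add: Least_equality)
  have p1: "pick {0,1} 1 = 1"
    using p0 by (simp, intro Least_equality) auto
  have c: "{i. i < 2 \<and> i \<in> {0::nat,1}} = {0,1}" by auto
  have "submatrix A {0,1} {0,1} = A"
  proof (rule eq_matI)
    show "dim_row (submatrix A {0, 1} {0, 1}) = dim_row A" "dim_col (submatrix A {0, 1} {0, 1}) = dim_col A"
      unfolding dim_submatrix using A c by auto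
    fix i j assume "i < dim_row A" "j < dim_col A"
    then have ij: "i < 2" "j < 2" using A by auto
    have pk: "\<And>i. i < 2 \<Longrightarrow> pick {0,1} i = i" using p0 p1 by (auto simp: less_2_cases_iff)
    have cc: "card {i. i < dim_row A \<and> i \<in> {0,1}} = 2" "card {i. i < dim_col A \<and> i \<in> {0,1}} = 2"
      using A c by auto
    have "submatrix A {0,1} {0,1} $$ (i,j) = A $$ (pick {0,1} i, pick {0,1} j)"
      by (rule submatrix_index) (simp_all only: cc ij)
    then show "submatrix A {0, 1} {0, 1} $$ (i, j) = A $$ (i, j)"
      using pk ij by simp
  qed
  moreover have "det A = A $$ (0,0) * A $$ (1,1)"
  proof -
    have "det A = prod_list (diag_mat A)"
    proof (rule det_lower_triangular[OF _ A])
      fix i j :: nat assume "i < j" "j < 2" then show "A $$ (i,j) = 0" using z by (auto simp: less_2_cases_iff)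
    qed
    also have "\<dots> = A $$ (0,0) * A $$ (1,1)" using A unfolding prod_list_diag_prod
      by (simp add: eval_nat_numeral atLeast0_lessThan_Suc)
    finally show ?thesis .
  qed
  ultimately have "2 \<in> ?S" using A d by (intro CollectI exI[of _ "{0,1}"]) auto
  then have "Max ?S \<ge> 2" by (rule Max_ge[OF fin])
  then show ?thesis unfolding minor_rank_def by simp
qed



definition cdv :: "nat \<Rightarrow> 'a::comm_ring_1 \<Rightarrow> (nat \<Rightarrow> 'a) \<Rightarrow> bool" where
  "cdv m e v \<longleftrightarrow> (\<forall>k<m. e dvd v k)"

lemma gen_ideal_mem: "finite S \<Longrightarrow> s \<in> S \<Longrightarrow> s \<in> gen_ideal S"
  unfolding gen_ideal_def
proof (rule CollectI, rule exI[of _ "\<lambda>x. if x = s then 1 else 0"])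
  assume "finite S" "s \<in> S"
  then show "s = (\<Sum>x\<in>S. (if x = s then 1 else 0) * x)"
  proof -
    have "(\<Sum>x\<in>S. (if x = s then 1 else 0) * x) = (\<Sum>x\<in>S. if x = s then s else 0)"
      by (rule sum.cong) auto
    also have "\<dots> = s" using \<open>finite S\<close> \<open>s \<in> S\<close> by simp
    finally show ?thesis by simp
  qed
qed

lemma gen_ideal_dvd: "finite S \<Longrightarrow> x \<in> gen_ideal S \<Longrightarrow> \<forall>s\<in>S. e dvd s \<Longrightarrow> e dvd x"
  unfolding gen_ideal_def by (auto intro!: dvd_sum dvd_mult)

lemma gen_ideal_insert:
  assumes T: "finite T" and x: "x \<in> gen_ideal (insert a T)"
  shows "\<exists>p y. y \<in> gen_ideal T \<and> x = p * a + y"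
proof -
  obtain f where f: "x = (\<Sum>s\<in>insert a T. f s * s)" using x unfolding gen_ideal_def by auto
  show ?thesis
  proof (cases "a \<in> T")
    case True
    then have "x = 0 * a + (\<Sum>s\<in>T. f s * s)" using f by (simp add: insert_absorb)
    then show ?thesis unfolding gen_ideal_def by blast
  next
    case False
    then have "x = f a * a + (\<Sum>s\<in>T. f s * s)" using f T by simp
    then show ?thesis unfolding gen_ideal_def by blast
  qed
qed

lemma gen_ideal_empty: "gen_ideal {} = {0}" unfolding gen_ideal_def by simp

lemma comb2: assumes "x \<in> gen_ideal {a,b}" shows "\<exists>p q. x = p*a + q*b"
proof -
  obtain p y where y: "y \<in> gen_ideal {b}" "x = p*a + y" using gen_ideal_insert[OF _ assms] by auto
  obtain q z where z: "z \<in> gen_ideal {}" "y = q*b + z" using gen_ideal_insert[of "{}" y b] y by auto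
  then have "z = 0" using gen_ideal_empty by auto
  then have "x = p*a + q*b" using y z by simp
  then show ?thesis by blast
qed

lemma comb3: assumes "x \<in> gen_ideal {a,b,c}" shows "\<exists>p q r. x = p*a + q*b + r*c"
proof -
  obtain p y where y: "y \<in> gen_ideal {b,c}" "x = p*a + y" using gen_ideal_insert[OF _ assms] by auto
  obtain q r where "y = q*b + r*c" using comb2[OF y(1)] by auto
  then have "x = p*a + q*b + r*c" using y by (simp add: algebra_simps)
  then show ?thesis by blast
qed

lemma bez_gcd:
  assumes bez: "bezout_domain TYPE('a::idom)" and S: "finite (S::'a set)"
  shows "\<exists>d. d \<in> gen_ideal S \<and> (\<forall>s\<in>S. d dvd s) \<and> (\<forall>e. (\<forall>s\<in>S. e dvd s) \<longrightarrow> e dvd d)"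
proof -
  obtain d where d: "gen_ideal S = {d * r | r. True}" using bez S unfolding bezout_domain_def by blast
  have dm: "d \<in> gen_ideal S" unfolding d by (auto intro: exI[of _ 1])
  have "\<forall>s\<in>S. d dvd s"
  proof
    fix s assume "s \<in> S"
    then have "s \<in> gen_ideal S" using gen_ideal_mem[OF S] by blast
    then show "d dvd s" unfolding d by auto
  qed
  moreover have "\<forall>e. (\<forall>s\<in>S. e dvd s) \<longrightarrow> e dvd d" using gen_ideal_dvd[OF S dm] by blast
  ultimately show ?thesis using dm by blast
qed

lemma unit_iff:
  assumes bez: "bezout_domain TYPE('a::idom)" and S: "finite (S::'a set)"
  shows "1 \<in> gen_ideal S \<longleftrightarrow> (\<forall>e. (\<forall>s\<in>S. e dvd s) \<longrightarrow> e dvd 1)"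
proof
  assume "1 \<in> gen_ideal S" then show "\<forall>e. (\<forall>s\<in>S. e dvd s) \<longrightarrow> e dvd 1"
    using gen_ideal_dvd[OF S] by blast
next
  assume h: "\<forall>e. (\<forall>s\<in>S. e dvd s) \<longrightarrow> e dvd 1"
  obtain d where d: "gen_ideal S = {d * r | r. True}" using bez S unfolding bezout_domain_def by blast
  have "\<forall>s\<in>S. d dvd s"
  proof
    fix s assume "s \<in> S"
    then have "s \<in> gen_ideal S" using gen_ideal_mem[OF S] by blast
    then show "d dvd s" unfolding d by auto
  qed
  then have "d dvd 1" using h by blast
  then obtain r where "1 = d * r" by (auto elim: dvdE)
  then show "1 \<in> gen_ideal S" unfolding d by auto
qed

lemma vgcd:
  fixes v :: "nat \<Rightarrow> 'a::idom" and m :: nat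
  assumes bez: "bezout_domain TYPE('a::idom)"
  shows "\<exists>(d::'a) \<mu>. (\<forall>k<m. d dvd v k) \<and> d = (\<Sum>k<m. \<mu> k * v k)"
proof (induction m)
  case 0 then show ?case by auto
next
  case (Suc m)
  then obtain d \<mu> where d: "\<forall>k<m. d dvd v k" "d = (\<Sum>k<m. \<mu> k * v k)" by blast
  obtain d' where d': "d' \<in> gen_ideal {d, v m}" "d' dvd d" "d' dvd v m"
    using bez_gcd[OF bez, of "{d, v m}"] by auto
  obtain p q where pq: "d' = p * d + q * v m" using comb2[OF d'(1)] by blast
  define \<mu>' where "\<mu>' k = (if k = m then q else p * \<mu> k)" for k
  have "(\<Sum>k<Suc m. \<mu>' k * v k) = (\<Sum>k<m. \<mu>' k * v k) + q * v m" by (simp add: \<mu>'_def)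
  also have "(\<Sum>k<m. \<mu>' k * v k) = p * d" unfolding d(2) sum_distrib_left
    by (rule sum.cong) (auto simp: \<mu>'_def)
  finally have "d' = (\<Sum>k<Suc m. \<mu>' k * v k)" using pq by simp
  moreover have "\<forall>k<Suc m. d' dvd v k"
    using d(1) d'(2,3) dvd_trans less_Suc_eq by metis
  ultimately show ?case by blast
qed

lemma vgcd_dvd: fixes v :: "nat \<Rightarrow> 'a::comm_ring_1" shows "\<forall>k<m. e dvd v k \<Longrightarrow> e dvd (\<Sum>k<m. \<mu> k * v k)"
  by (auto intro!: dvd_sum dvd_mult)

lemma sr_div:
  assumes bez: "bezout_domain TYPE('a::idom)" and sr: "stable_range_15 TYPE('a)"
    and c: "c \<noteq> 0" and cop: "\<forall>e. e dvd a \<longrightarrow> e dvd b \<longrightarrow> e dvd c \<longrightarrow> e dvd (1::'a)"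
  shows "\<exists>r \<sigma> \<tau>. 1 = \<sigma>*(a+b*r) + \<tau>*c"
proof -
  have "1 \<in> gen_ideal {a,b,c}" using cop by (subst unit_iff[OF bez]) auto
  then obtain r where "1 \<in> gen_ideal {a + b*r, c}" using sr c unfolding stable_range_15_def by blast
  then show ?thesis using comb2 by blast
qed



lemma lemW:
  fixes a b :: "nat \<Rightarrow> 'a::idom" and c :: 'a and m :: nat
  assumes bez: "bezout_domain TYPE('a)" and sr: "stable_range_15 TYPE('a)"
    and nz: "c \<noteq> 0 \<or> (\<exists>k<m. \<exists>l<m. a k * b l \<noteq> a l * b k)"
    and cop: "\<forall>e. cdv m e a \<longrightarrow> cdv m e b \<longrightarrow> e dvd c \<longrightarrow> e dvd 1"
  shows "\<exists>lam. \<forall>e. cdv m e (\<lambda>k. a k + lam * b k) \<longrightarrow> e dvd c \<longrightarrow> e dvd 1"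
proof (cases "\<forall>k<m. a k = 0")
  case True
  show ?thesis
  proof (intro exI allI impI)
    fix e assume "cdv m e (\<lambda>k. a k + 1 * b k)" "e dvd c"
    then show "e dvd 1" using cop True unfolding cdv_def by auto
  qed
next
  case False
  then obtain k0 where k0: "k0 < m" "a k0 \<noteq> 0" by auto
  obtain g \<alpha> where g: "\<forall>k<m. g dvd a k" "g = (\<Sum>k<m. \<alpha> k * a k)" using vgcd[OF bez] by blast
  have g0: "g \<noteq> 0" using g(1) k0 by auto
  define x where "x k = (SOME q. a k = g * q)" for k
  have ax: "a k = g * x k" if "k < m" for k
  proof -
    from g(1) that obtain q where "a k = g * q" by (auto elim: dvdE)
    then show ?thesis unfolding x_def by (rule someI)
  qed
  have sx: "(\<Sum>k<m. \<alpha> k * x k) = 1"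
  proof -
    have "g * (\<Sum>k<m. \<alpha> k * x k) = (\<Sum>k<m. \<alpha> k * a k)"
      unfolding sum_distrib_left by (rule sum.cong) (auto simp: ax)
    then have "g * (\<Sum>k<m. \<alpha> k * x k) = g * 1" using g(2) by simp
    then show ?thesis using g0 by simp
  qed
  define \<beta> where "\<beta> = (\<Sum>k<m. \<alpha> k * b k)"
  define y where "y k = b k - \<beta> * x k" for k
  have by': "b k = \<beta> * x k + y k" for k unfolding y_def by simp
  have sy: "(\<Sum>k<m. \<alpha> k * y k) = 0"
  proof -
    have "(\<Sum>k<m. \<alpha> k * y k) = (\<Sum>k<m. \<alpha> k * b k) - \<beta> * (\<Sum>k<m. \<alpha> k * x k)"
      unfolding y_def by (simp add: algebra_simps sum_subtractf sum_distrib_left)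
    then show ?thesis using sx \<beta>_def by simp
  qed
  obtain h \<mu> where h: "\<forall>k<m. h dvd y k" "h = (\<Sum>k<m. \<mu> k * y k)" using vgcd[OF bez] by blast
  obtain c' where c': "c' \<in> gen_ideal {h, c}" "c' dvd h" "c' dvd c"
    using bez_gcd[OF bez, of "{h,c}"] by auto
  obtain \<nu>1 \<nu>2 where cc: "c' = \<nu>1 * h + \<nu>2 * c" using comb2[OF c'(1)] by blast
  have c'0: "c' \<noteq> 0"
  proof
    assume "c' = 0"
    then have h0: "h = 0" and "c = 0" using c' by auto
    then obtain k l where kl: "k<m" "l<m" "a k * b l \<noteq> a l * b k" using nz by auto
    have "y k = 0" "y l = 0" using h h0 kl by auto
    then have "b k = \<beta> * x k" "b l = \<beta> * x l" using by' by auto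
    then have "a k * b l = a l * b k" using ax kl by (simp add: algebra_simps)
    with kl show False by simp
  qed
  have "\<forall>e. e dvd (g + \<beta>) \<longrightarrow> e dvd (g*\<beta>) \<longrightarrow> e dvd c' \<longrightarrow> e dvd 1"
  proof (intro allI impI)
    fix e assume e: "e dvd g + \<beta>" "e dvd g * \<beta>" "e dvd c'"
    obtain D where D: "D \<in> gen_ideal {g, \<beta>, c'}" "D dvd g" "D dvd \<beta>" "D dvd c'"
      using bez_gcd[OF bez, of "{g,\<beta>,c'}"] by auto
    have "D dvd 1"
    proof -
      have "cdv m D a" unfolding cdv_def using D(2) ax by (auto intro: dvd_mult2)
      moreover have "cdv m D b" unfolding cdv_def
      proof (intro allI impI)
        fix k assume k: "k < m"
        have "D dvd y k" using dvd_trans[OF dvd_trans[OF D(4) c'(2)] h(1)[rule_format, OF k]] .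
        then show "D dvd b k" using by'[of k] D(3) by (metis dvd_add dvd_mult2)
      qed
      moreover have "D dvd c" using D(4) c'(3) by (rule dvd_trans)
      ultimately show ?thesis using cop by blast
    qed
    then obtain w where w: "1 = D * w" by (auto elim: dvdE)
    obtain p q r where "D = p*g + q*\<beta> + r*c'" using comb3[OF D(1)] by blast
    then have one: "1 = (w*p)*g + (w*q)*\<beta> + (w*r)*c'" using w by (simp add: algebra_simps)
    define P where "P = w*p"
    define Q where "Q = w*q"
    define R where "R = w*r"
    have one': "1 = P*g + Q*\<beta> + R*c'" using one unfolding P_def Q_def R_def .
    have e1: "e dvd g*(g+\<beta>) - g*\<beta>" by (rule dvd_diff[OF dvd_mult[OF e(1)] e(2)])
    have e2: "e dvd \<beta>*(g+\<beta>) - g*\<beta>" by (rule dvd_diff[OF dvd_mult[OF e(1)] e(2)])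
    have "(1::'a) = (P*g + Q*\<beta> + R*c')^2" using one' by simp
    also have "\<dots> = P^2 * (g*(g+\<beta>) - g*\<beta>) + 2*P*Q*(g*\<beta>) + Q^2*(\<beta>*(g+\<beta>) - g*\<beta>)
        + c' * (R*(2*P*g + 2*Q*\<beta> + R*c'))"
      by (simp add: power2_eq_square algebra_simps)
    finally show "e dvd 1"
      using dvd_add[OF dvd_add[OF dvd_add[OF dvd_mult[OF e1] dvd_mult[OF e(2)]] dvd_mult[OF e2]] dvd_mult2[OF e(3)]]
      by metis
  qed
  from sr_div[OF bez sr c'0 this] obtain s \<sigma> \<tau> where st: "1 = \<sigma>*(g + \<beta> + g*\<beta>*s) + \<tau>*c'" by blast
  define lam where "lam = 1 + s*g"
  define X where "X = g + lam*\<beta>"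
  have X: "X = g + \<beta> + g*\<beta>*s" unfolding X_def lam_def by (simp add: algebra_simps)
  show ?thesis
  proof (intro exI[of _ lam] allI impI)
    fix e assume ev: "cdv m e (\<lambda>k. a k + lam * b k)" and ec: "e dvd c"
    have v: "a k + lam * b k = X * x k + lam * y k" if "k < m" for k
      using ax[OF that] by' unfolding X_def by (simp add: algebra_simps)
    have "(\<Sum>k<m. \<alpha> k * (a k + lam * b k)) = (\<Sum>k<m. \<alpha> k * (X * x k + lam * y k))"
      by (rule sum.cong) (auto simp: v)
    also have "\<dots> = X * (\<Sum>k<m. \<alpha> k * x k) + lam * (\<Sum>k<m. \<alpha> k * y k)"
      by (simp add: algebra_simps sum.distrib sum_distrib_left)
    also have "\<dots> = X" using sx sy by simp
    finally have sX: "(\<Sum>k<m. \<alpha> k * (a k + lam * b k)) = X" .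
    have "e dvd (\<Sum>k<m. \<alpha> k * (a k + lam * b k))"
      by (rule vgcd_dvd) (use ev in \<open>simp add: cdv_def\<close>)
    then have eX: "e dvd X" unfolding sX .
    have ey: "\<forall>k<m. e dvd lam * y k"
    proof (intro allI impI)
      fix k assume k: "k < m"
      have "lam * y k = (a k + lam * b k) - X * x k" using v[OF k] by simp
      then show "e dvd lam * y k" using ev k eX unfolding cdv_def by (auto intro: dvd_diff dvd_mult2)
    qed
    have "lam * h = (\<Sum>k<m. \<mu> k * (lam * y k))" unfolding h(2) by (simp add: sum_distrib_left algebra_simps)
    then have eh: "e dvd lam * h" using vgcd_dvd[OF ey] by simp
    have "lam * c' = \<nu>1 * (lam * h) + \<nu>2 * (lam * c)" unfolding cc by (simp add: algebra_simps)
    then have ec': "e dvd lam * c'" using eh ec by (auto intro: dvd_add dvd_mult)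
    define L where "L = lam*(1+s*\<beta>) - s*X"
    have L: "L = 1" unfolding L_def X_def lam_def by (simp add: algebra_simps)
    have "(\<sigma>*X + \<tau>*c') * L = X*(\<sigma>*L - \<tau>*c'*s) + (\<tau>*(1+s*\<beta>))*(lam*c')"
      unfolding L_def by (simp add: algebra_simps)
    moreover have "(\<sigma>*X + \<tau>*c') * L = 1" using st X L by simp
    ultimately have "1 = X*(\<sigma>*L - \<tau>*c'*s) + (\<tau>*(1+s*\<beta>))*(lam*c')" by simp
    then show "e dvd 1" using eX ec' by (metis dvd_add dvd_mult dvd_mult2)
  qed
qed

lemma sum_upd:
  fixes t :: "nat \<Rightarrow> 'a::comm_ring_1"
  assumes "q < p"
  shows "(\<Sum>i<p. (t(q := t q + z)) i * b i) = (\<Sum>i<p. t i * b i) + z * b q"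
proof -
  have "(\<Sum>i<p. (t(q := t q + z)) i * b i) = (\<Sum>i<p. t i * b i + (if i = q then z * b q else 0))"
    by (rule sum.cong) (auto simp: algebra_simps)
  also have "\<dots> = (\<Sum>i<p. t i * b i) + z * b q" using assms by (simp add: sum.distrib)
  finally show ?thesis .
qed

lemma lemM:
  fixes a :: "nat \<Rightarrow> 'a::idom" and b :: "nat \<Rightarrow> nat \<Rightarrow> 'a" and m :: nat
  assumes bez: "bezout_domain TYPE('a)" and sr: "stable_range_15 TYPE('a)"
  shows "c \<noteq> 0 \<Longrightarrow> (\<forall>e. cdv m e a \<longrightarrow> (\<forall>i<p. cdv m e (b i)) \<longrightarrow> e dvd c \<longrightarrow> e dvd 1) \<Longrightarrow>
    \<exists>t. \<forall>e. cdv m e (\<lambda>k. a k + (\<Sum>i<p. t i * b i k)) \<longrightarrow> e dvd c \<longrightarrow> e dvd 1"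
proof (induction p arbitrary: c)
  case 0 then show ?case by (auto simp: cdv_def)
next
  case (Suc p)
  obtain d0 \<mu> where d0: "\<forall>k<m. d0 dvd b p k" "d0 = (\<Sum>k<m. \<mu> k * b p k)" using vgcd[OF bez] by blast
  obtain c'' where c'': "c'' \<in> gen_ideal {c, d0}" "\<forall>s\<in>{c,d0}. c'' dvd s" "\<forall>e. (\<forall>s\<in>{c,d0}. e dvd s) \<longrightarrow> e dvd c''"
    using bez_gcd[OF bez, of "{c,d0}"] by auto
  have c''0: "c'' \<noteq> 0" using c''(2) Suc.prems(1) by auto
  have "\<forall>e. cdv m e a \<longrightarrow> (\<forall>i<p. cdv m e (b i)) \<longrightarrow> e dvd c'' \<longrightarrow> e dvd 1"
  proof (intro allI impI)
    fix e assume e: "cdv m e a" "\<forall>i<p. cdv m e (b i)" "e dvd c''"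
    have "e dvd c" "e dvd d0" using e(3) c''(2) dvd_trans by auto
    then have "cdv m e (b p)" using d0(1) dvd_trans unfolding cdv_def by blast
    then have "\<forall>i<Suc p. cdv m e (b i)" using e(2) less_Suc_eq by auto
    then show "e dvd 1" using Suc.prems(2) e(1) \<open>e dvd c\<close> by blast
  qed
  from Suc.IH[OF c''0 this] obtain t where
    t: "\<forall>e. cdv m e (\<lambda>k. a k + (\<Sum>i<p. t i * b i k)) \<longrightarrow> e dvd c'' \<longrightarrow> e dvd 1" by blast
  define a' where "a' k = a k + (\<Sum>i<p. t i * b i k)" for k
  have "\<forall>e. cdv m e a' \<longrightarrow> cdv m e (b p) \<longrightarrow> e dvd c \<longrightarrow> e dvd 1"
  proof (intro allI impI)
    fix e assume e: "cdv m e a'" "cdv m e (b p)" "e dvd c"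
    have "e dvd d0" unfolding d0(2) using e(2) unfolding cdv_def by (rule vgcd_dvd)
    then have "e dvd c''" using c''(3) e(3) by auto
    then show "e dvd 1" using t e(1) unfolding a'_def by blast
  qed
  from lemW[OF bez sr _ this] Suc.prems(1) obtain lam where
    l: "\<forall>e. cdv m e (\<lambda>k. a' k + lam * b p k) \<longrightarrow> e dvd c \<longrightarrow> e dvd 1" by blast
  have eq: "(\<Sum>i<Suc p. (t(p := lam)) i * b i k) = (\<Sum>i<p. t i * b i k) + lam * b p k" for k
  proof -
    have "(\<Sum>i<p. (t(p := lam)) i * b i k) = (\<Sum>i<p. t i * b i k)" by (rule sum.cong) auto
    then show ?thesis by simp
  qed
  show ?case
  proof (intro exI[of _ "t(p := lam)"] allI impI)
    fix e assume "cdv m e (\<lambda>k. a k + (\<Sum>i<Suc p. (t(p := lam)) i * b i k))" "e dvd c"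
    then show "e dvd 1" using l unfolding eq a'_def by (simp add: add.assoc)
  qed
qed



lemma main_fun:
  fixes F :: "nat \<Rightarrow> nat \<Rightarrow> 'a::idom" and n m :: nat
  assumes bez: "bezout_domain TYPE('a)" and sr: "stable_range_15 TYPE('a)"
    and ij: "i1 < n" "i2 < n" "j1 < m" "j2 < m" "F i1 j1 * F i2 j2 \<noteq> F i1 j2 * F i2 j1"
    and cop: "\<forall>e. (\<forall>i<n. \<forall>k<m. e dvd F i k) \<longrightarrow> e dvd 1"
  shows "\<exists>t. \<forall>e. (\<forall>k<m. e dvd (F 0 k + (\<Sum>i<n-1. t i * F (Suc i) k))) \<longrightarrow> e dvd 1"
proof -
  obtain r1 r2 k l where rk: "r1 < n" "r2 < n" "k < m" "l < m" "0 < r2" "F r1 k * F r2 l \<noteq> F r1 l * F r2 k"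
  proof (cases "i2 = 0")
    case True
    have "i1 \<noteq> 0"
    proof
      assume "i1 = 0"
      then show False using ij(5) True by (simp add: ac_simps)
    qed
    moreover have "F i2 j2 * F i1 j1 \<noteq> F i2 j1 * F i1 j2" using ij(5) by (simp add: mult.commute)
    ultimately show ?thesis using that[of i2 i1 j2 j1] ij True by auto
  next
    case False then show ?thesis using that[of i1 i2 j1 j2] ij by auto
  qed
  define q where "q = r2 - 1"
  have q: "q < n - 1" "Suc q = r2" using rk unfolding q_def by auto
  define b where "b i k = F (Suc i) k" for i k
  define y where "y = F r2"
  have yb: "b q = y" unfolding b_def y_def q(2)[symmetric] by simp
  obtain e0 \<mu> where e0: "\<forall>k<m. e0 dvd y k" "e0 = (\<Sum>k<m. \<mu> k * y k)" using vgcd[OF bez] by blast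
  have e00: "e0 \<noteq> 0"
  proof
    assume "e0 = 0"
    then have "y k = 0" "y l = 0" using e0(1) rk by auto
    then show False using rk(6) unfolding y_def by simp
  qed
  have "\<forall>e. cdv m e (F 0) \<longrightarrow> (\<forall>i<n-1. cdv m e (b i)) \<longrightarrow> e dvd e0 \<longrightarrow> e dvd 1"
  proof (intro allI impI)
    fix e assume e: "cdv m e (F 0)" "\<forall>i<n-1. cdv m e (b i)" "e dvd e0"
    have "\<forall>i<n. \<forall>k<m. e dvd F i k"
    proof (intro allI impI)
      fix i k assume ik: "i < n" "k < m"
      show "e dvd F i k"
      proof (cases i)
        case 0 then show ?thesis using e(1) ik unfolding cdv_def by simp
      next
        case (Suc i')
        then have "i' < n - 1" using ik by auto
        then show ?thesis using e(2) ik Suc unfolding cdv_def b_def by simp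
      qed
    qed
    then show "e dvd 1" using cop by blast
  qed
  from lemM[OF bez sr e00 this] obtain t where
    t: "\<forall>e. cdv m e (\<lambda>k. F 0 k + (\<Sum>i<n-1. t i * b i k)) \<longrightarrow> e dvd e0 \<longrightarrow> e dvd 1" by blast
  define x where "x t k = F 0 k + (\<Sum>i<n-1. t i * b i k)" for t k
  have lin: "x t k * y l - x t l * y k = (F 0 k * y l - F 0 l * y k) + (\<Sum>i<n-1. t i * (b i k * y l - b i l * y k))" for t
  proof -
    have "x t k * y l - x t l * y k = (F 0 k * y l - F 0 l * y k) + ((\<Sum>i<n-1. t i * b i k) * y l - (\<Sum>i<n-1. t i * b i l) * y k)"
      unfolding x_def by (simp add: algebra_simps)
    also have "(\<Sum>i<n-1. t i * b i k) * y l - (\<Sum>i<n-1. t i * b i l) * y k = (\<Sum>i<n-1. t i * (b i k * y l - b i l * y k))"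
    proof -
      have "(\<Sum>i<n-1. t i * b i k) * y l - (\<Sum>i<n-1. t i * b i l) * y k
          = (\<Sum>i<n-1. t i * b i k * y l) - (\<Sum>i<n-1. t i * b i l * y k)"
        by (simp add: sum_distrib_right)
      also have "\<dots> = (\<Sum>i<n-1. t i * b i k * y l - t i * b i l * y k)"
        by (simp add: sum_subtractf)
      also have "\<dots> = (\<Sum>i<n-1. t i * (b i k * y l - b i l * y k))"
        by (rule sum.cong) (auto simp: algebra_simps)
      finally show ?thesis .
    qed
    finally show ?thesis .
  qed
  obtain t' where t': "\<forall>e. cdv m e (x t') \<longrightarrow> e dvd e0 \<longrightarrow> e dvd 1" "x t' k * y l - x t' l * y k \<noteq> 0"
  proof (cases "x t k * y l - x t l * y k = 0")
    case False
    then show ?thesis using that[of t] t unfolding x_def by blast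
  next
    case True
    have "\<exists>i<n-1. b i k * y l - b i l * y k \<noteq> 0"
    proof (rule ccontr)
      assume "\<not> ?thesis"
      then have z: "\<forall>i<n-1. b i k * y l - b i l * y k = 0" by auto
      then have "(\<Sum>i<n-1. t i * (b i k * y l - b i l * y k)) = 0" by simp
      then have z0: "F 0 k * y l - F 0 l * y k = 0" using True lin[of t] by simp
      have "F r1 k * y l - F r1 l * y k = 0"
      proof (cases r1)
        case 0 then show ?thesis using z0 by simp
      next
        case (Suc i') then have "i' < n - 1" using rk by auto
        then show ?thesis using z Suc unfolding b_def by simp
      qed
      then show False using rk(6) unfolding y_def by simp
    qed
    then obtain i where i: "i < n - 1" "b i k * y l - b i l * y k \<noteq> 0" by blast
    define t2 where "t2 = t(i := t i + e0)"
    have xt2: "x t2 k' = x t k' + e0 * b i k'" for k'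
      unfolding x_def t2_def using sum_upd[OF i(1), of t e0 "\<lambda>j. b j k'"] by (simp add: algebra_simps)
    have "x t2 k * y l - x t2 l * y k = (x t k * y l - x t l * y k) + e0 * (b i k * y l - b i l * y k)"
      unfolding xt2 by (simp add: algebra_simps)
    then have m2: "x t2 k * y l - x t2 l * y k \<noteq> 0" using True i(2) e00 by simp
    have "\<forall>e. cdv m e (x t2) \<longrightarrow> e dvd e0 \<longrightarrow> e dvd 1"
    proof (intro allI impI)
      fix e assume e: "cdv m e (x t2)" "e dvd e0"
      have "cdv m e (x t)" unfolding cdv_def
      proof (intro allI impI)
        fix k' assume "k' < m"
        then have "e dvd x t2 k'" using e(1) unfolding cdv_def by simp
        moreover have "x t k' = x t2 k' - e0 * b i k'" unfolding xt2 by simp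
        ultimately show "e dvd x t k'" using e(2) by (simp add: dvd_diff dvd_mult2)
      qed
      then show "e dvd 1" using t e(2) unfolding x_def by blast
    qed
    then show ?thesis using that m2 by blast
  qed
  have nz: "(0::'a) \<noteq> 0 \<or> (\<exists>k'<m. \<exists>l'<m. x t' k' * y l' \<noteq> x t' l' * y k')"
    using t'(2) rk(3,4) by auto
  have "\<forall>e. cdv m e (x t') \<longrightarrow> cdv m e y \<longrightarrow> e dvd 0 \<longrightarrow> e dvd 1"
  proof (intro allI impI)
    fix e assume e: "cdv m e (x t')" "cdv m e y"
    have "e dvd e0" unfolding e0(2) using e(2) unfolding cdv_def by (rule vgcd_dvd)
    then show "e dvd 1" using t'(1) e(1) by blast
  qed
  from lemW[OF bez sr nz this] obtain lam where
    lam: "\<forall>e. cdv m e (\<lambda>k. x t' k + lam * y k) \<longrightarrow> e dvd 0 \<longrightarrow> e dvd 1" by blast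
  define t3 where "t3 = t'(q := t' q + lam)"
  have xt3: "x t3 k' = x t' k' + lam * y k'" for k'
    unfolding x_def t3_def using sum_upd[OF q(1), of t' lam "\<lambda>j. b j k'"] yb by (simp add: algebra_simps)
  show ?thesis
  proof (intro exI[of _ t3] allI impI)
    fix e assume "\<forall>k<m. e dvd F 0 k + (\<Sum>i<n - 1. t3 i * F (Suc i) k)"
    then have "\<forall>k<m. e dvd x t3 k" unfolding x_def b_def by simp
    then have "cdv m e (\<lambda>k. x t' k + lam * y k)" unfolding cdv_def xt3 by simp
    then show "e dvd 1" using lam by simp
  qed
qed



theorem theorem2p21:
  assumes "bezout_domain TYPE('a::idom)"
  shows "stable_range_15 TYPE('a) \<longleftrightarrow>
    (\<forall>A :: 'a mat. minor_rank A > 1 \<longrightarrow>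
       (\<exists>u. dim_vec u = dim_row A \<and> u $ 0 = 1 \<and>
          (\<exists>d. is_gcd_of d (entries A) \<and>
               is_gcd_of d {row_times_mat u A $ j | j. j < dim_col A})))"
proof
  assume sr: "stable_range_15 TYPE('a)"
  show "\<forall>A :: 'a mat. minor_rank A > 1 \<longrightarrow>
       (\<exists>u. dim_vec u = dim_row A \<and> u $ 0 = 1 \<and>
          (\<exists>d. is_gcd_of d (entries A) \<and>
               is_gcd_of d {row_times_mat u A $ j | j. j < dim_col A}))"
  proof (intro allI impI)
    fix A :: "'a mat" assume r: "minor_rank A > 1"
    define n where "n = dim_row A"
    define m where "m = dim_col A"
    obtain i1 i2 j1 j2 where ij: "i1 < n" "i2 < n" "j1 < m" "j2 < m"
      "A $$ (i1,j1) * A $$ (i2,j2) \<noteq> A $$ (i1,j2) * A $$ (i2,j1)"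
      using rank_minor[OF r] unfolding n_def m_def by blast
    have fin: "finite (entries A)"
    proof -
      have "entries A = (\<lambda>(i,j). A $$ (i,j)) ` ({..<n} \<times> {..<m})" unfolding entries_def n_def m_def by auto
      then show ?thesis by simp
    qed
    obtain \<delta> where \<delta>: "\<forall>s\<in>entries A. \<delta> dvd s" "\<forall>e. (\<forall>s\<in>entries A. e dvd s) \<longrightarrow> e dvd \<delta>"
      using bez_gcd[OF assms fin] by blast
    have ent: "A $$ (i,k) \<in> entries A" if "i < n" "k < m" for i k
      using that unfolding entries_def n_def m_def by blast
    have dA: "\<delta> dvd A $$ (i,k)" if "i<n" "k<m" for i k using \<delta>(1) ent[OF that] by blast
    have \<delta>0: "\<delta> \<noteq> 0"
    proof
      assume "\<delta> = 0"
      then have "A $$ (i,k) = 0" if "i<n" "k<m" for i k using dA[OF that] by simp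
      then show False using ij by simp
    qed
    define F where "F i k = (SOME q. A $$ (i,k) = \<delta> * q)" for i k
    have AF: "A $$ (i,k) = \<delta> * F i k" if "i<n" "k<m" for i k
    proof -
      from dA[OF that] obtain q where "A $$ (i,k) = \<delta> * q" by (auto elim: dvdE)
      then show ?thesis unfolding F_def by (rule someI)
    qed
    have Fm: "F i1 j1 * F i2 j2 \<noteq> F i1 j2 * F i2 j1"
    proof
      assume h: "F i1 j1 * F i2 j2 = F i1 j2 * F i2 j1"
      have "(\<delta>*\<delta>) * (F i1 j1 * F i2 j2) = (\<delta>*\<delta>) * (F i1 j2 * F i2 j1)" using h by simp
      then have "(\<delta>*F i1 j1) * (\<delta>*F i2 j2) = (\<delta>*F i1 j2) * (\<delta>*F i2 j1)" by (simp add: ac_simps)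
      then show False using ij AF by simp
    qed
    have cop: "\<forall>e. (\<forall>i<n. \<forall>k<m. e dvd F i k) \<longrightarrow> e dvd 1"
    proof (intro allI impI)
      fix e assume e: "\<forall>i<n. \<forall>k<m. e dvd F i k"
      have "\<forall>s\<in>entries A. \<delta> * e dvd s"
      proof
        fix s assume "s \<in> entries A"
        then obtain i k where ik: "i < n" "k < m" "s = A $$ (i,k)" unfolding entries_def n_def m_def by blast
        then show "\<delta> * e dvd s" using AF[OF ik(1,2)] e by (simp add: mult_dvd_mono)
      qed
      then have "\<delta> * e dvd \<delta> * 1" using \<delta>(2) by simp
      then show "e dvd 1" using \<delta>0 by simp
    qed
    from main_fun[OF assms sr ij(1-4) Fm cop] obtain t where
      t: "\<forall>e. (\<forall>k<m. e dvd (F 0 k + (\<Sum>i<n-1. t i * F (Suc i) k))) \<longrightarrow> e dvd 1" by blast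
    define w where "w k = F 0 k + (\<Sum>i<n-1. t i * F (Suc i) k)" for k
    define u where "u = vec n (\<lambda>i. if i = 0 then (1::'a) else t (i - 1))"
    have n1: "n = Suc (n - 1)" using ij by auto
    have row: "row_times_mat u A $ k = \<delta> * w k" if k: "k < m" for k
    proof -
      have "row_times_mat u A $ k = (\<Sum>i<n. u $ i * A $$ (i,k))"
        unfolding row_times_mat_def using k unfolding n_def m_def by simp
      also have "\<dots> = u $ 0 * A $$ (0,k) + (\<Sum>i<n-1. u $ (Suc i) * A $$ (Suc i,k))"
        by (subst n1, subst sum.lessThan_Suc_shift) simp
      also have "(\<Sum>i<n-1. u $ (Suc i) * A $$ (Suc i,k)) = (\<Sum>i<n-1. \<delta> * (t i * F (Suc i) k))"
        by (rule sum.cong) (use k in \<open>auto simp: u_def AF\<close>)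
      also have "u $ 0 * A $$ (0,k) = \<delta> * F 0 k" using k n1 AF[of 0 k] unfolding u_def by simp
      finally show ?thesis unfolding w_def by (simp add: sum_distrib_left distrib_left)
    qed
    show "\<exists>u. dim_vec u = dim_row A \<and> u $ 0 = 1 \<and>
          (\<exists>d. is_gcd_of d (entries A) \<and>
               is_gcd_of d {row_times_mat u A $ j | j. j < dim_col A})"
    proof (intro exI conjI)
      show "dim_vec u = dim_row A" unfolding u_def n_def by simp
      show "u $ 0 = 1" unfolding u_def using n1 by (subst index_vec) auto
      show "is_gcd_of \<delta> (entries A)" unfolding is_gcd_of_def using \<delta> by blast
      show "is_gcd_of \<delta> {row_times_mat u A $ j | j. j < dim_col A}"
        unfolding is_gcd_of_def
      proof (intro conjI allI impI ballI)
        fix s assume "s \<in> {row_times_mat u A $ j | j. j < dim_col A}"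
        then show "\<delta> dvd s" using row unfolding m_def by auto
      next
        fix e assume e: "\<forall>s\<in>{row_times_mat u A $ j | j. j < dim_col A}. e dvd s"
        obtain dw \<mu> where dw: "\<forall>k<m. dw dvd w k" "dw = (\<Sum>k<m. \<mu> k * w k)" using vgcd[OF assms] by blast
        have "dw dvd 1" using t dw(1) unfolding w_def by blast
        then obtain z where z: "1 = dw * z" by (auto elim: dvdE)
        have ek: "\<forall>k<m. e dvd \<delta> * w k" using e row unfolding m_def by auto
        have "\<delta> = z * (\<Sum>k<m. \<mu> k * (\<delta> * w k))"
        proof -
          have "\<delta> = \<delta> * (dw * z)" using z by simp
          also have "\<dots> = z * (\<Sum>k<m. \<mu> k * (\<delta> * w k))"
            unfolding dw(2) by (simp add: sum_distrib_left algebra_simps)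
          finally show ?thesis .
        qed
        then show "e dvd \<delta>" using vgcd_dvd[OF ek] by (metis dvd_mult)
      qed
    qed
  qed
next
  assume H: "\<forall>A :: 'a mat. minor_rank A > 1 \<longrightarrow>
       (\<exists>u. dim_vec u = dim_row A \<and> u $ 0 = 1 \<and>
          (\<exists>d. is_gcd_of d (entries A) \<and>
               is_gcd_of d {row_times_mat u A $ j | j. j < dim_col A}))"
  show "stable_range_15 TYPE('a)"
    unfolding stable_range_15_def
  proof (intro allI impI)
    fix a b c :: 'a assume c: "c \<noteq> 0" and abc: "1 \<in> gen_ideal {a, b, c}"
    have cop: "\<forall>e. e dvd a \<longrightarrow> e dvd b \<longrightarrow> e dvd c \<longrightarrow> e dvd 1"
      using abc unfolding unit_iff[OF assms finite.insertI[OF finite.insertI[OF finite.insertI[OF finite.emptyI]]]] by auto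
    have "\<exists>r. \<forall>e. e dvd a + b * r \<longrightarrow> e dvd c \<longrightarrow> e dvd 1"
    proof (cases "a = 0")
      case True
      then show ?thesis using cop by (intro exI[of _ 1]) auto
    next
      case False
      define A :: "'a mat" where "A = mat 2 2 (\<lambda>(i,j). if i = 0 then (if j = 0 then a else 0) else (if j = 0 then b else c))"
      have Ac: "A \<in> carrier_mat 2 2" unfolding A_def by simp
      have "minor_rank A > 1"
        by (rule rank_2x2[OF Ac]) (use False c in \<open>auto simp: A_def\<close>)
      with H obtain u d where u: "dim_vec u = 2" "u $ 0 = 1" "is_gcd_of d (entries A)"
        "is_gcd_of d {row_times_mat u A $ j | j. j < 2}" using Ac by auto
      define r where "r = u $ 1"
      have r0: "row_times_mat u A $ 0 = a + b * r" unfolding row_times_mat_def r_def A_def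
        using u(2) by (simp add: numeral_2_eq_2 ac_simps)
      have r1: "row_times_mat u A $ 1 = r * c" unfolding row_times_mat_def r_def A_def
        by (simp add: numeral_2_eq_2 ac_simps)
      have em: "A $$ (i,j) \<in> entries A" if "i < 2" "j < 2" for i j
        using that Ac unfolding entries_def by auto
      have "A $$ (0,0) = a" "A $$ (1,0) = b" "A $$ (1,1) = c" unfolding A_def by auto
      then have "a \<in> entries A" "b \<in> entries A" "c \<in> entries A" using em by fastforce+
      then have "d dvd a" "d dvd b" "d dvd c" using u(3) unfolding is_gcd_of_def by auto
      then have d1: "d dvd 1" using cop by blast
      show ?thesis
      proof (intro exI[of _ r] allI impI)
        fix e assume e: "e dvd a + b * r" "e dvd c"
        have "\<forall>s\<in>{row_times_mat u A $ j | j. j < 2}. e dvd s"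
        proof
          fix s assume "s \<in> {row_times_mat u A $ j | j. j < 2}"
          then obtain j where j: "j < (2::nat)" "s = row_times_mat u A $ j" by blast
          then have "j = 0 \<or> j = 1" by auto
          then show "e dvd s" using j r0 r1 e by (auto intro: dvd_mult)
        qed
        then have "e dvd d" using u(4) unfolding is_gcd_of_def by blast
        then show "e dvd 1" using d1 by (rule dvd_trans)
      qed
    qed
    then obtain r where r: "\<forall>e. e dvd a + b * r \<longrightarrow> e dvd c \<longrightarrow> e dvd 1" by blast
    have "1 \<in> gen_ideal {a + b * r, c}"
      using r by (subst unit_iff[OF assms]) auto
    then show "\<exists>r. 1 \<in> gen_ideal {a + b * r, c}" by blast
  qed
qed

end
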